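(* Let $T$ be a tree of order $n\ge 1$ and let \[ h(T)=\prod_{w\in V(T)}\bigl(d_T(w)+1\bigr)^{d_T(w)+1}. \] Then $h(T)\le 4^{n-1}n^n$, with equality if and only if $T\cong S_n$.
   Context: $d_T(w)$ denotes the degree of vertex $w$ in $T$. $S_n$ denotes the star on $n$ vertices (for $n\le 3$ this coincides with the path on $n$ vertices). *)

theory Defs
  imports Main
begin

definition sgraph :: "'a set \<Rightarrow> 'a set set \<Rightarrow> bool" where
  "sgraph V E \<longleftrightarrow> finite V \<and> (\<forall>e\<in>E. e \<subseteq> V \<and> card e = 2)"

definition degree :: "'a set set \<Rightarrow> 'a \<Rightarrow> nat" where
  "degree E v = card {e \<in> E. v \<in> e}"

definition walk :: "'a set set \<Rightarrow> 'a list \<Rightarrow> bool" where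
  "walk E xs \<longleftrightarrow> (\<forall>i. Suc i < length xs \<longrightarrow> {xs ! i, xs ! Suc i} \<in> E)"

definition connected_graph :: "'a set \<Rightarrow> 'a set set \<Rightarrow> bool" where
  "connected_graph V E \<longleftrightarrow>
     (\<forall>u\<in>V. \<forall>v\<in>V. \<exists>xs. xs \<noteq> [] \<and> hd xs = u \<and> last xs = v \<and> set xs \<subseteq> V \<and> walk E xs)"

definition is_cycle :: "'a set set \<Rightarrow> 'a list \<Rightarrow> bool" where
  "is_cycle E xs \<longleftrightarrow> length xs \<ge> 3 \<and> distinct xs \<and> walk E xs \<and> {last xs, hd xs} \<in> E"

definition is_tree :: "'a set \<Rightarrow> 'a set set \<Rightarrow> bool" where
  "is_tree V E \<longleftrightarrow> sgraph V E \<and> V \<noteq> {} \<and> connected_graph V E \<and>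
     \<not> (\<exists>xs. set xs \<subseteq> V \<and> is_cycle E xs)"

definition star_edges :: "nat \<Rightarrow> nat set set" where
  "star_edges n = {{0, i} | i. 0 < i \<and> i < n}"

definition graph_iso :: "'a set \<Rightarrow> 'a set set \<Rightarrow> 'b set \<Rightarrow> 'b set set \<Rightarrow> bool" where
  "graph_iso V E W F \<longleftrightarrow> (\<exists>f. bij_betw f V W \<and>
     (\<forall>u\<in>V. \<forall>v\<in>V. {u, v} \<in> E \<longleftrightarrow> {f u, f v} \<in> F))"

definition h_index :: "'a set \<Rightarrow> 'a set set \<Rightarrow> nat" where
  "h_index V E = (\<Prod>w\<in>V. (degree E w + 1) ^ (degree E w + 1))"

end

theory Submission
  imports Defs Complex_Main
begin


lemma exp_bound: fixes k::nat assumes "k\<ge>1"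
  shows "exp (1 / (real k + 2)) \<le> (real k + 2) / (real k + 1)"
proof -
  let ?t = "1 / (real k + 2)"
  have "1 - ?t \<le> exp (- ?t)" using exp_ge_add_one_self[of "-?t"] by simp
  moreover have "1 - ?t = (real k + 1)/(real k + 2)" by (simp add: field_simps)
  ultimately have h: "(real k + 1)/(real k + 2) \<le> inverse (exp ?t)" by (simp add: exp_minus)
  have "exp ?t = inverse (inverse (exp ?t))" by simp
  also have "\<dots> \<le> inverse ((real k + 1)/(real k + 2))"
    using h by (intro le_imp_inverse_le) auto
  finally show ?thesis by simp
qed

lemma logconv_real: fixes k::nat assumes "k\<ge>1"
  shows "(real k + 1)^(2*(k+1)) < real k ^ k * (real k + 2)^(k+2)"
proof -
  define a where "a = real k * (real k + 2)"
  have apos: "a > 0" using assms unfolding a_def by simp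
  define t where "t = 1 / a"
  have sq: "(real k + 1)^2 = a * (1 + t)" unfolding a_def t_def using apos
    by (simp add: field_simps power2_eq_square a_def)
  have "(1 + t)^k \<le> exp t ^ k"
    using t_def apos by (intro power_mono) (auto simp: add.commute)
  also have "\<dots> = exp (real k * t)" by (simp add: exp_of_nat_mult)
  also have "real k * t = 1 / (real k + 2)" unfolding t_def a_def using assms apos by (simp add: a_def divide_simps)
  finally have b1: "(1+t)^k \<le> (real k + 2) / (real k + 1)" using exp_bound[OF assms] by linarith
  have "(real k + 1)^(2*(k+1)) = ((real k + 1)^2)^k * (real k + 1)^2"
    by (simp add: power_mult[symmetric] power_add[symmetric] algebra_simps)
  also have "\<dots> = a^k * (1+t)^k * (real k + 1)^2" by (simp add: sq power_mult_distrib)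
  also have "\<dots> \<le> a^k * ((real k + 2) / (real k + 1)) * (real k + 1)^2"
    using b1 apos by (intro mult_right_mono mult_left_mono) auto
  also have "\<dots> = a^k * (real k + 2) * (real k + 1)" by (simp add: power2_eq_square field_simps)
  also have "\<dots> < a^k * (real k + 2) * (real k + 2)" using apos by simp
  also have "\<dots> = real k ^ k * (real k + 2)^(k+2)" unfolding a_def
    by (simp add: power_mult_distrib power_add power2_eq_square)
  finally show ?thesis .
qed

lemma logconv_nat: fixes k::nat assumes "k\<ge>1"
  shows "(k + 1)^(2*(k+1)) < k ^ k * (k + 2)^(k+2)"
proof -
  have e1: "real ((k + 1)^(2*(k+1))) = (real k + 1)^(2*(k+1))" by (simp only: of_nat_mult of_nat_power of_nat_add of_nat_1 of_nat_numeral)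
  have e2: "real (k ^ k * (k + 2)^(k+2)) = real k ^ k * (real k + 2)^(k+2)" by (simp only: of_nat_mult of_nat_power of_nat_add of_nat_1 of_nat_numeral)
  have "real ((k + 1)^(2*(k+1))) < real (k ^ k * (k + 2)^(k+2))"
    unfolding e1 e2 by (rule logconv_real[OF assms])
  then show ?thesis by (simp only: of_nat_less_iff)
qed


definition F :: "nat \<Rightarrow> nat" where "F e = (e+2)^(e+2)"

lemma F_pos: "F x > 0" by (simp add: F_def)

lemma F_mono_strict: "x < y \<Longrightarrow> F x < F y"
proof -
  assume "x < y"
  have "(x+2)^(x+2) < (y+2)^(x+2)" using \<open>x<y\<close> by (intro power_strict_mono) auto
  also have "\<dots> \<le> (y+2)^(y+2)" using \<open>x<y\<close> by (intro power_increasing) auto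
  finally show ?thesis by (simp add: F_def)
qed

lemma F_lc: "F (x+1) * F (x+1) < F x * F (x+2)"
proof -
  have "(x+2+1)^(2*(x+2+1)) < (x+2)^(x+2) * (x+2+2)^(x+2+2)"
    by (rule logconv_nat) simp
  moreover have "(x+2+1)^(2*(x+2+1)) = F (x+1) * F (x+1)"
  proof -
    have e: "x+2+1 = x+3" "2*(x+3) = (x+3)+(x+3)" "x+1+2 = x+3" by simp_all
    have "(x+2+1)^(2*(x+2+1)) = (x+3)^((x+3) + (x+3))" by (simp only: e)
    also have "\<dots> = (x+3)^(x+3) * (x+3)^(x+3)" by (rule power_add)
    also have "(x+3)^(x+3) = F (x+1)" unfolding F_def by (simp only: e(3))
    finally show ?thesis .
  qed
  moreover have "(x+2)^(x+2) * (x+2+2)^(x+2+2) = F x * F (x+2)"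
    unfolding F_def by (simp add: add.commute add.left_commute)
  ultimately show ?thesis by simp
qed

lemma F_ratio_strict: "x < y \<Longrightarrow> F (x+1) * F y < F x * F (y+1)"
proof (induction y)
  case 0 then show ?case by simp
next
  case (Suc y)
  show ?case
  proof (cases "x = y")
    case True then show ?thesis using F_lc[of x] by simp
  next
    case False
    then have ih: "F (x+1) * F y < F x * F (y+1)" using Suc by simp
    have lc: "F (y+1) * F (y+1) < F y * F (y+2)" by (rule F_lc)
    have "(F (x+1) * F (Suc y)) * (F y * F (y+1)) = (F (x+1) * F y) * (F (y+1) * F (y+1))"
      by (simp add: ac_simps)
    also have "\<dots> < (F x * F (y+1)) * (F y * F (y+2))"
      by (rule mult_strict_mono[OF ih lc]) (simp_all add: F_pos)
    also have "\<dots> = (F x * F (Suc y + 1)) * (F y * F (y+1))"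
      by (simp add: ac_simps)
    finally show ?thesis using F_pos by (simp del: mult_less_cancel2 add: mult_less_cancel2[symmetric]) 
  qed
qed

lemma F_ratio: "x \<le> y \<Longrightarrow> F (x+1) * F y \<le> F x * F (y+1)"
  using F_ratio_strict[of x y] by (cases "x = y") (auto simp: ac_simps)

lemma F_super: "F a * F b \<le> 4 * F (a+b) \<and> (a \<ge> 1 \<longrightarrow> b \<ge> 1 \<longrightarrow> F a * F b < 4 * F (a+b))"
proof (induction b)
  case 0 then show ?case by (simp add: F_def)
next
  case (Suc b)
  then have ih: "F a * F b \<le> 4 * F (a+b)" by simp
  have r: "F (b+1) * F (a+b) \<le> F b * F (a+b+1)" by (rule F_ratio) simp
  have "(F a * F (Suc b)) * F (a+b) = F a * (F (b+1) * F (a+b))" by (simp add: ac_simps)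
  also have "\<dots> \<le> F a * (F b * F (a+b+1))" using r by simp
  also have "\<dots> = (F a * F b) * F (a+b+1)" by (simp add: ac_simps)
  also have "\<dots> \<le> (4 * F (a+b)) * F (a+b+1)" using ih by simp
  also have "\<dots> = (4 * F (a + Suc b)) * F (a+b)" by (simp add: ac_simps)
  finally have le: "F a * F (Suc b) \<le> 4 * F (a + Suc b)" using F_pos by simp
  have lt: "F a * F (Suc b) < 4 * F (a + Suc b)" if "a \<ge> 1"
  proof -
    have r: "F (b+1) * F (a+b) < F b * F (a+b+1)" by (rule F_ratio_strict) (use that in simp)
    have "(F a * F (Suc b)) * F (a+b) = F a * (F (b+1) * F (a+b))" by (simp add: ac_simps)
    also have "\<dots> < F a * (F b * F (a+b+1))" using r F_pos by simp
    also have "\<dots> = (F a * F b) * F (a+b+1)" by (simp add: ac_simps)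
    also have "\<dots> \<le> (4 * F (a+b)) * F (a+b+1)" using ih by simp
    also have "\<dots> = (4 * F (a + Suc b)) * F (a+b)" by (simp add: ac_simps)
    finally show ?thesis using F_pos by (simp del: mult_less_cancel2 add: mult_less_cancel2[symmetric])
  qed
  show ?case using le lt by simp
qed

lemma F_prod:
  assumes "finite S" "S \<noteq> {}"
  shows "(\<Prod>w\<in>S. F (e w)) \<le> 4^(card S - 1) * F (sum e S) \<and>
    ((\<exists>w1\<in>S. \<exists>w2\<in>S. w1 \<noteq> w2 \<and> e w1 \<ge> 1 \<and> e w2 \<ge> 1) \<longrightarrow>
      (\<Prod>w\<in>S. F (e w)) < 4^(card S - 1) * F (sum e S))"
  using assms
proof (induction S rule: finite_ne_induct)
  case (singleton x) then show ?case by auto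
next
  case (insert x S)
  have cS: "card S \<ge> 1" using insert by (simp add: Suc_le_eq card_gt_0_iff)
  have eq: "4^(card (insert x S) - 1) = 4 * 4^(card S - 1)" using insert cS
    by (simp add: power_Suc[symmetric] Suc_diff_le del: power_Suc)
  have P: "(\<Prod>w\<in>insert x S. F (e w)) = F (e x) * (\<Prod>w\<in>S. F (e w))" using insert by simp
  have Sm: "sum e (insert x S) = e x + sum e S" using insert by simp
  have ih1: "(\<Prod>w\<in>S. F (e w)) \<le> 4^(card S - 1) * F (sum e S)" using insert by simp
  have sup: "F (e x) * F (sum e S) \<le> 4 * F (e x + sum e S)" using F_super by blast
  have le: "F (e x) * (\<Prod>w\<in>S. F (e w)) \<le> 4 * 4^(card S - 1) * F (e x + sum e S)"
  proof -
    have "F (e x) * (\<Prod>w\<in>S. F (e w)) \<le> F (e x) * (4^(card S - 1) * F (sum e S))"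
      using ih1 by simp
    also have "\<dots> = 4^(card S - 1) * (F (e x) * F (sum e S))" by (simp add: ac_simps)
    also have "\<dots> \<le> 4^(card S - 1) * (4 * F (e x + sum e S))" using sup by simp
    finally show ?thesis by (simp add: ac_simps)
  qed
  have lt: "F (e x) * (\<Prod>w\<in>S. F (e w)) < 4 * 4^(card S - 1) * F (e x + sum e S)"
    if ex: "\<exists>w1\<in>insert x S. \<exists>w2\<in>insert x S. w1 \<noteq> w2 \<and> e w1 \<ge> 1 \<and> e w2 \<ge> 1"
  proof (cases "\<exists>w1\<in>S. \<exists>w2\<in>S. w1 \<noteq> w2 \<and> e w1 \<ge> 1 \<and> e w2 \<ge> 1")
    case True
    then have ih2: "(\<Prod>w\<in>S. F (e w)) < 4^(card S - 1) * F (sum e S)" using insert by simp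
    have "F (e x) * (\<Prod>w\<in>S. F (e w)) < F (e x) * (4^(card S - 1) * F (sum e S))"
      using ih2 F_pos by simp
    also have "\<dots> = 4^(card S - 1) * (F (e x) * F (sum e S))" by (simp add: ac_simps)
    also have "\<dots> \<le> 4^(card S - 1) * (4 * F (e x + sum e S))" using sup by simp
    finally show ?thesis by (simp add: ac_simps)
  next
    case False
    with ex insert.hyps obtain w where w: "w \<in> S" "e x \<ge> 1" "e w \<ge> 1" by blast
    have "e w \<le> sum e S" using w insert.hyps by (intro member_le_sum) auto
    then have sS: "sum e S \<ge> 1" using w by simp
    have sup2: "F (e x) * F (sum e S) < 4 * F (e x + sum e S)" using F_super w sS by blast
    have "F (e x) * (\<Prod>w\<in>S. F (e w)) \<le> F (e x) * (4^(card S - 1) * F (sum e S))"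
      using ih1 by simp
    also have "\<dots> = 4^(card S - 1) * (F (e x) * F (sum e S))" by (simp add: ac_simps)
    also have "\<dots> < 4^(card S - 1) * (4 * F (e x + sum e S))" using sup2 by simp
    finally show ?thesis by (simp add: ac_simps)
  qed
  show ?case unfolding P Sm eq using le lt by (simp add: ac_simps)
qed



lemma sgraph_finE: "sgraph V E \<Longrightarrow> finite E"
  unfolding sgraph_def by (meson Pow_iff finite_Pow_iff finite_subset subsetI)

lemma handshake:
  assumes "sgraph V E"
  shows "(\<Sum>w\<in>V. degree E w) = 2 * card E"
proof -
  have fV: "finite V" and fE: "finite E" using assms sgraph_finE by (auto simp: sgraph_def)
  have "(\<Sum>w\<in>V. degree E w) = (\<Sum>w\<in>V. \<Sum>e\<in>E. if w \<in> e then 1 else 0)"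
    unfolding degree_def using fE by (simp add: sum.inter_filter[symmetric])
  also have "\<dots> = (\<Sum>e\<in>E. \<Sum>w\<in>V. if w \<in> e then 1 else 0)" by (rule sum.swap)
  also have "\<dots> = (\<Sum>e\<in>E. card {w\<in>V. w \<in> e})"
    using fV by (simp add: sum.inter_filter[symmetric])
  also have "\<dots> = (\<Sum>e\<in>E. 2)"
  proof (rule sum.cong)
    fix e assume "e \<in> E"
    then have "e \<subseteq> V" "card e = 2" using assms by (auto simp: sgraph_def)
    then have "{w\<in>V. w \<in> e} = e" by auto
    then show "card {w\<in>V. w \<in> e} = 2" using \<open>card e = 2\<close> by simp
  qed simp
  finally show ?thesis by simp
qed

lemma walk_mono: "E \<subseteq> E' \<Longrightarrow> walk E xs \<Longrightarrow> walk E' xs"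
  unfolding walk_def by blast

lemma walk_drop: "walk E xs \<Longrightarrow> walk E (drop i xs)"
  unfolding walk_def
proof (intro allI impI)
  fix j assume w: "\<forall>i. Suc i < length xs \<longrightarrow> {xs ! i, xs ! Suc i} \<in> E" and j: "Suc j < length (drop i xs)"
  then have "Suc (i + j) < length xs" by simp
  then have "{xs ! (i+j), xs ! Suc (i+j)} \<in> E" using w by blast
  then show "{drop i xs ! j, drop i xs ! Suc j} \<in> E" using j by simp
qed

lemma walk_snoc: "walk E xs \<Longrightarrow> xs \<noteq> [] \<Longrightarrow> {last xs, u} \<in> E \<Longrightarrow> walk E (xs @ [u])"
  unfolding walk_def
proof (intro allI impI)
  fix i assume w: "\<forall>i. Suc i < length xs \<longrightarrow> {xs ! i, xs ! Suc i} \<in> E" and ne: "xs \<noteq> []"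
    and l: "{last xs, u} \<in> E" and i: "Suc i < length (xs @ [u])"
  show "{(xs @ [u]) ! i, (xs @ [u]) ! Suc i} \<in> E"
  proof (cases "Suc i < length xs")
    case True then show ?thesis using w by (simp add: nth_append)
  next
    case False
    then have "Suc i = length xs" using i by simp
    then have "i = length xs - 1" by simp
    then show ?thesis using l ne by (simp add: nth_append last_conv_nth)
  qed
qed

definition acyc :: "'a set \<Rightarrow> 'a set set \<Rightarrow> bool" where
  "acyc V E \<longleftrightarrow> \<not> (\<exists>xs. set xs \<subseteq> V \<and> is_cycle E xs)"

lemma leaf_exists:
  assumes g: "sgraph V E" and ac: "acyc V E" and ne: "E \<noteq> {}"
  shows "\<exists>v\<in>V. \<exists>p. p \<noteq> v \<and> {e\<in>E. v \<in> e} = {{p, v}}"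
proof -
  have fV: "finite V" using g by (simp add: sgraph_def)
  define P where "P xs \<longleftrightarrow> distinct xs \<and> set xs \<subseteq> V \<and> walk E xs \<and> 2 \<le> length xs" for xs
  obtain e0 where "e0 \<in> E" using ne by blast
  then obtain a b where ab: "e0 = {a,b}" "a \<noteq> b" "e0 \<subseteq> V" using g unfolding sgraph_def
    by (metis card_2_iff)
  have "P [a,b]" using ab \<open>e0 \<in> E\<close> unfolding P_def walk_def by (auto simp: less_Suc_eq)
  moreover have "\<forall>ys. P ys \<longrightarrow> length ys < card V + 1"
    unfolding P_def using fV by (metis card_mono distinct_card less_Suc_eq_le Suc_eq_plus1)
  ultimately obtain xs where xs: "P xs" and mx: "\<And>ys. P ys \<Longrightarrow> length ys \<le> length xs"
    using Lattices_Big.ex_has_greatest_nat[of P "[a,b]" length "card V + 1"] by blast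
  define k where "k = length xs"
  have k2: "k \<ge> 2" using xs unfolding P_def k_def by simp
  define v where "v = xs ! (k-1)"
  define p where "p = xs ! (k-2)"
  have xne: "xs \<noteq> []" using k2 k_def by auto
  have lastv: "last xs = v" unfolding v_def k_def using xne by (simp add: last_conv_nth)
  have dist: "distinct xs" and sV: "set xs \<subseteq> V" and wk: "walk E xs" using xs P_def by auto
  have pv: "{p, v} \<in> E"
  proof -
    have "Suc (k-2) < length xs" "Suc (k-2) = k - 1" using k2 k_def by auto
    then show ?thesis using wk unfolding walk_def p_def v_def by metis
  qed
  have pnv: "p \<noteq> v" unfolding p_def v_def using dist k2 k_def
    by (simp add: nth_eq_iff_index_eq)
  have vV: "v \<in> V" using sV lastv xne last_in_set by blast
  have all: "e = {p, v}" if e: "e \<in> E" "v \<in> e" for e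
  proof -
    obtain x y where "e = {x,y}" "x \<noteq> y" using g e unfolding sgraph_def by (metis card_2_iff)
    then obtain u where u: "e = {v, u}" "u \<noteq> v" using e by auto
    have uV: "u \<in> V" using g e u unfolding sgraph_def by auto
    show ?thesis
    proof (cases "u \<in> set xs")
      case False
      have "P (xs @ [u])" unfolding P_def using dist sV wk False uV xne lastv e u k2 k_def
        by (auto intro!: walk_snoc)
      then have "length (xs @ [u]) \<le> length xs" by (rule mx)
      then show ?thesis by simp
    next
      case True
      then obtain i where i: "i < k" "xs ! i = u" unfolding k_def by (metis in_set_conv_nth)
      have ik: "i \<noteq> k - 1" using i u v_def by auto
      show ?thesis
      proof (cases "i = k - 2")
        case True then show ?thesis using i u p_def by auto
      next
        case False
        then have ilt: "i + 3 \<le> k" using ik i k2 by linarith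
        define ys where "ys = drop i xs"
        have "is_cycle E ys" unfolding is_cycle_def ys_def
        proof (intro conjI)
          show "3 \<le> length (drop i xs)" using ilt k_def by simp
          show "distinct (drop i xs)" using dist by simp
          show "walk E (drop i xs)" using wk by (rule walk_drop)
          have "last (drop i xs) = v" using lastv ilt k_def by (simp add: last_drop)
          moreover have "hd (drop i xs) = u" using i k_def by (simp add: hd_drop_conv_nth)
          ultimately show "{last (drop i xs), hd (drop i xs)} \<in> E" using e u by simp
        qed
        moreover have "set ys \<subseteq> V" using sV unfolding ys_def by (meson set_drop_subset subset_trans)
        ultimately show ?thesis using ac unfolding acyc_def by blast
      qed
    qed
  qed
  have "{e\<in>E. v \<in> e} = {{p, v}}"
  proof
    show "{e\<in>E. v \<in> e} \<subseteq> {{p,v}}" using all by blast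
    show "{{p,v}} \<subseteq> {e\<in>E. v \<in> e}" using pv by blast
  qed
  then show ?thesis using vV pnv by blast
qed

lemma forest_card:
  assumes "sgraph V E" "acyc V E" "V \<noteq> {}"
  shows "card E < card V"
  using assms
proof (induction "card V" arbitrary: V E rule: less_induct)
  case less
  have fV: "finite V" using less by (simp add: sgraph_def)
  have fE: "finite E" using less sgraph_finE by blast
  show ?case
  proof (cases "E = {}")
    case True then show ?thesis using fV less by (simp add: card_gt_0_iff)
  next
    case False
    obtain v p where v: "v \<in> V" "p \<noteq> v" "{e\<in>E. v \<in> e} = {{p, v}}"
      using leaf_exists[OF less(2,3) False] by blast
    have pvE: "{p,v} \<in> E" using v by blast
    have pV: "p \<in> V" using pvE less(2) unfolding sgraph_def by auto
    define V' where "V' = V - {v}"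
    define E' where "E' = E - {{p,v}}"
    have g': "sgraph V' E'" unfolding sgraph_def
    proof (intro conjI ballI)
      show "finite V'" using fV V'_def by simp
      fix e assume e: "e \<in> E'"
      then have "e \<in> E" "e \<noteq> {p,v}" unfolding E'_def by auto
      then have "v \<notin> e" using v by blast
      then show "e \<subseteq> V'" using \<open>e \<in> E\<close> less(2) unfolding sgraph_def V'_def by auto
      show "card e = 2" using \<open>e \<in> E\<close> less(2) unfolding sgraph_def by auto
    qed
    have a': "acyc V' E'" unfolding acyc_def
    proof
      assume "\<exists>xs. set xs \<subseteq> V' \<and> is_cycle E' xs"
      then obtain xs where xs: "set xs \<subseteq> V'" "is_cycle E' xs" by blast
      have sub: "E' \<subseteq> E" unfolding E'_def by blast
      have "is_cycle E xs" using xs(2) walk_mono[OF sub] sub unfolding is_cycle_def by blast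
      moreover have "set xs \<subseteq> V" using xs(1) unfolding V'_def by blast
      ultimately show False using less(3) unfolding acyc_def by blast
    qed
    have ne': "V' \<noteq> {}" using pV v V'_def by auto
    have cV: "card V' < card V" 
    proof -
      have "card V > 0" using v fV card_gt_0_iff by blast
      then show ?thesis using v fV V'_def by simp
    qed
    have "card E' < card V'" using less(1)[OF cV g' a' ne'] .
    moreover have "card E' = card E - 1" unfolding E'_def using pvE fE by simp
    moreover have "card V' = card V - 1" unfolding V'_def using v fV by simp
    moreover have "card E \<ge> 1" using pvE fE by (metis One_nat_def Suc_leI card_gt_0_iff empty_iff)
    ultimately show ?thesis by linarith
  qed
qed

lemma tree_deg_pos:
  assumes t: "is_tree V E" and c: "card V \<ge> 2" and v: "v \<in> V"
  shows "degree E v \<ge> 1"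
proof -
  have g: "sgraph V E" using t by (simp add: is_tree_def)
  have fE: "finite E" using g sgraph_finE by blast
  obtain u where u: "u \<in> V" "u \<noteq> v"
  proof -
    have "card (V - {v}) \<ge> 1" using c v by (simp add: card_Diff_singleton_if)
    then have "V - {v} \<noteq> {}" by (metis card.empty not_one_le_zero)
    then show ?thesis using that by blast
  qed
  obtain xs where xs: "xs \<noteq> []" "hd xs = v" "last xs = u" "walk E xs"
    using t u v unfolding is_tree_def connected_graph_def by blast
  have "length xs \<ge> 2"
  proof (rule ccontr)
    assume "\<not> length xs \<ge> 2"
    then have "length xs = 1" using xs by (cases xs) (auto simp: Suc_le_eq)
    then have "hd xs = last xs" by (cases xs) auto
    then show False using xs u by simp
  qed
  then have "{xs!0, xs!1} \<in> E" using xs unfolding walk_def by auto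
  moreover have "xs ! 0 = v" using xs by (simp add: hd_conv_nth)
  ultimately have "{xs!0, xs!1} \<in> {e\<in>E. v \<in> e}" by simp
  then have "card {e\<in>E. v \<in> e} > 0" using fE by (auto simp: card_gt_0_iff)
  then show ?thesis unfolding degree_def by simp
qed



lemma star_deg:
  assumes fV: "finite V" and c: "c \<in> V" and E: "E = (\<lambda>x. {c,x}) ` (V - {c})"
  shows "degree E c = card V - 1" "\<And>x. x \<in> V - {c} \<Longrightarrow> degree E x = 1"
proof -
  have inj: "inj_on (\<lambda>x. {c,x}) (V - {c})" by (rule inj_onI) (auto simp: doubleton_eq_iff)
  have "{e\<in>E. c \<in> e} = E" using E by auto
  then show "degree E c = card V - 1" unfolding degree_def using E card_image[OF inj] fV c by simp
  fix x assume x: "x \<in> V - {c}"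
  have "{e\<in>E. x \<in> e} = {{c,x}}" using E x by auto
  then show "degree E x = 1" unfolding degree_def by simp
qed

lemma star_h:
  assumes fV: "finite V" and c: "c \<in> V" and E: "E = (\<lambda>x. {c,x}) ` (V - {c})" and n: "card V = n"
  shows "h_index V E = 4^(n-1) * n^n"
proof -
  have n1: "n \<ge> 1" using fV c n by (metis One_nat_def Suc_leI card_gt_0_iff empty_iff)
  have "h_index V E = (degree E c + 1)^(degree E c + 1) * (\<Prod>w\<in>V-{c}. (degree E w + 1)^(degree E w + 1))"
    unfolding h_index_def using fV c by (simp add: prod.remove)
  also have "(\<Prod>w\<in>V-{c}. (degree E w + 1)^(degree E w + 1)) = (\<Prod>w\<in>V-{c}. 4)"
    using star_deg(2)[OF fV c E] by (intro prod.cong) auto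
  also have "\<dots> = 4^(n-1)" using fV c n by simp
  also have "degree E c + 1 = n" using star_deg(1)[OF fV c E] n n1 by simp
  finally show ?thesis by simp
qed

lemma star_iso:
  assumes fV: "finite V" and c: "c \<in> V" and E: "E = (\<lambda>x. {c,x}) ` (V - {c})" and n: "card V = n"
  shows "graph_iso V E {0..<n} (star_edges n)"
proof -
  have "card (V - {c}) = card {1..<n}" using fV c n by simp
  then obtain f1 where f1: "bij_betw f1 (V - {c}) {1..<n}"
    using finite_same_card_bij[of "V - {c}" "{1..<n}"] fV by auto
  define f where "f x = (if x = c then 0 else f1 x)" for x
  have b1: "bij_betw f (V - {c}) {1..<n}" using f1 unfolding f_def
    by (rule bij_betw_cong[THEN iffD1, rotated]) auto
  have b0: "bij_betw f {c} {0}" unfolding f_def by (simp add: bij_betw_def)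
  have n1: "n \<ge> 1" using fV c n by (metis One_nat_def Suc_leI card_gt_0_iff empty_iff)
  have "bij_betw f ({c} \<union> (V - {c})) ({0} \<union> {1..<n})"
    by (rule bij_betw_combine[OF b0 b1]) auto
  moreover have "{c} \<union> (V - {c}) = V" using c by auto
  moreover have "{0} \<union> {1..<n} = {0..<n}" using n1 by auto
  ultimately have bij: "bij_betw f V {0..<n}" by simp
  have f0: "f x = 0 \<longleftrightarrow> x = c" if "x \<in> V" for x
  proof (cases "x = c")
    case False
    then have "f1 x \<in> {1..<n}" using that f1 unfolding bij_betw_def by blast
    then show ?thesis using False unfolding f_def by auto
  qed (simp add: f_def)
  have fn: "f x < n" if "x \<in> V" for x using bij that unfolding bij_betw_def by auto
  have fi: "f x = f y \<Longrightarrow> x = y" if "x \<in> V" "y \<in> V" for x y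
    using bij that unfolding bij_betw_def inj_on_def by blast
  show ?thesis unfolding graph_iso_def
  proof (intro exI conjI ballI)
    show "bij_betw f V {0..<n}" by (rule bij)
    fix u v assume u: "u \<in> V" and v: "v \<in> V"
    have L: "{u,v} \<in> E \<longleftrightarrow> (u = c \<and> v \<noteq> c) \<or> (v = c \<and> u \<noteq> c)"
      using E u v by (auto simp: doubleton_eq_iff)
    have R: "{f u, f v} \<in> star_edges n \<longleftrightarrow> (f u = 0 \<and> f v \<noteq> 0) \<or> (f v = 0 \<and> f u \<noteq> 0)"
      unfolding star_edges_def using fn[OF u] fn[OF v] by (auto simp: doubleton_eq_iff)
    show "{u,v} \<in> E \<longleftrightarrow> {f u, f v} \<in> star_edges n" unfolding L R using f0[OF u] f0[OF v] by simp
  qed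
qed

lemma iso_star:
  assumes g: "sgraph V E" and iso: "graph_iso V E {0..<n} (star_edges n)" and n1: "n \<ge> 1"
  shows "\<exists>c\<in>V. E = (\<lambda>x. {c,x}) ` (V - {c})"
proof -
  obtain f where bij: "bij_betw f V {0..<n}" and ed: "\<forall>u\<in>V. \<forall>v\<in>V. {u, v} \<in> E \<longleftrightarrow> {f u, f v} \<in> star_edges n"
    using iso unfolding graph_iso_def by blast
  obtain c where c: "c \<in> V" "f c = 0" using bij n1 unfolding bij_betw_def
    by (metis atLeastLessThan_iff image_iff le0 less_le_trans zero_less_one)
  have fi: "f x = f y \<Longrightarrow> x = y" if "x \<in> V" "y \<in> V" for x y
    using bij that unfolding bij_betw_def inj_on_def by blast
  have fn: "f x < n" if "x \<in> V" for x using bij that unfolding bij_betw_def by auto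
  have f0: "f x = 0 \<longleftrightarrow> x = c" if "x \<in> V" for x using fi[OF that c(1)] c by auto
  have "E = (\<lambda>x. {c,x}) ` (V - {c})"
  proof
    show "E \<subseteq> (\<lambda>x. {c,x}) ` (V - {c})"
    proof
      fix e assume e: "e \<in> E"
      then obtain u v where uv: "e = {u,v}" "u \<noteq> v" using g unfolding sgraph_def by (metis card_2_iff)
      have uV: "u \<in> V" and vV: "v \<in> V" using g e uv unfolding sgraph_def by auto
      have "{f u, f v} \<in> star_edges n" using ed uV vV e uv by blast
      then obtain i where "{f u, f v} = {0, i}" "0 < i" unfolding star_edges_def by auto
      then have "(f u = 0) \<or> (f v = 0)" by (auto simp: doubleton_eq_iff)
      then have "u = c \<or> v = c" using f0 uV vV by blast
      then show "e \<in> (\<lambda>x. {c,x}) ` (V - {c})" using uv uV vV by (auto simp: insert_commute)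
    qed
    show "(\<lambda>x. {c,x}) ` (V - {c}) \<subseteq> E"
    proof
      fix e assume "e \<in> (\<lambda>x. {c,x}) ` (V - {c})"
      then obtain x where x: "x \<in> V" "x \<noteq> c" "e = {c,x}" by auto
      have "f x \<noteq> 0" using f0 x by blast
      then have "{f c, f x} \<in> star_edges n" using c fn[OF x(1)] unfolding star_edges_def by auto
      then show "e \<in> E" using ed c x by blast
    qed
  qed
  then show ?thesis using c by blast
qed



theorem lemma2p8:
  fixes V :: "'a set" and E :: "'a set set" and n :: nat
  assumes "is_tree V E" and "card V = n" and "n \<ge> 1"
  shows "h_index V E \<le> 4 ^ (n - 1) * n ^ n \<and>
         (h_index V E = 4 ^ (n - 1) * n ^ n \<longleftrightarrow> graph_iso V E {0..<n} (star_edges n))"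
proof -
  have g: "sgraph V E" and Vne: "V \<noteq> {}" and ac: "acyc V E"
    using assms(1) unfolding is_tree_def acyc_def by auto
  have fV: "finite V" using g sgraph_def by blast
  have fE: "finite E" using g sgraph_finE by blast
  have cE: "card E < n" using forest_card[OF g ac Vne] assms(2) by simp
  let ?g = "\<lambda>c. (\<lambda>x. {c,x}) ` (V - {c})"
  have conv: "graph_iso V E {0..<n} (star_edges n) \<Longrightarrow> h_index V E = 4 ^ (n - 1) * n ^ n"
    using iso_star[OF g _ assms(3)] star_h[OF fV _ _ assms(2)] by blast
  show ?thesis
  proof (cases "n = 1")
    case True
    then obtain c where Vc: "V = {c}" using assms(2) card_1_singletonE by blast
    have "E = {}"
    proof (rule ccontr)
      assume "E \<noteq> {}"
      then obtain e where "e \<in> E" by blast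
      then have "e \<subseteq> V" "card e = 2" using g unfolding sgraph_def by auto
      then have "card e \<le> card V" using fV card_mono by blast
      then show False using \<open>card e = 2\<close> assms(2) True by simp
    qed
    then have Eg: "E = ?g c" using Vc by simp
    have c: "c \<in> V" using Vc by simp
    show ?thesis using star_h[OF fV c Eg assms(2)] star_iso[OF fV c Eg assms(2)] by simp
  next
    case False
    then have n2: "n \<ge> 2" using assms(3) by simp
    define e where "e w = degree E w - 1" for w
    have dpos: "degree E w \<ge> 1" if "w \<in> V" for w
      using tree_deg_pos[OF assms(1) _ that] n2 assms(2) by simp
    have hF: "h_index V E = (\<Prod>w\<in>V. F (e w))"
      unfolding h_index_def
    proof (rule prod.cong)
      fix w assume "w \<in> V"
      then have "e w + 2 = degree E w + 1" using dpos unfolding e_def by fastforce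
      then show "(degree E w + 1) ^ (degree E w + 1) = F (e w)" unfolding F_def by simp
    qed simp
    have "sum e V + card V = sum (degree E) V"
    proof -
      have "(\<Sum>w\<in>V. e w + 1) = sum e V + (\<Sum>w\<in>V. 1)" by (rule sum.distrib)
      then have "sum e V + card V = (\<Sum>w\<in>V. e w + 1)" by simp
      also have "\<dots> = sum (degree E) V" using dpos unfolding e_def by (intro sum.cong) (auto simp: Suc_le_eq)
      finally show ?thesis .
    qed
    then have se: "sum e V \<le> n - 2" using handshake[OF g] cE assms(2) by linarith
    have Fn: "F (n - 2) = n ^ n" unfolding F_def using n2 by (simp only: le_add_diff_inverse2)
    have Fle: "F (sum e V) \<le> F (n - 2)"
      using se F_mono_strict[of "sum e V" "n - 2"] by (cases "sum e V = n - 2") auto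
    have pr: "(\<Prod>w\<in>V. F (e w)) \<le> 4^(card V - 1) * F (sum e V) \<and>
      ((\<exists>w1\<in>V. \<exists>w2\<in>V. w1 \<noteq> w2 \<and> e w1 \<ge> 1 \<and> e w2 \<ge> 1) \<longrightarrow>
      (\<Prod>w\<in>V. F (e w)) < 4^(card V - 1) * F (sum e V))" by (rule F_prod[OF fV Vne])
    have le: "h_index V E \<le> 4 ^ (n - 1) * n ^ n"
    proof -
      have "h_index V E \<le> 4^(n - 1) * F (sum e V)" using pr hF assms(2) by simp
      also have "\<dots> \<le> 4^(n-1) * F (n - 2)" using Fle by simp
      finally show ?thesis using Fn by simp
    qed
    have fwd: "graph_iso V E {0..<n} (star_edges n)" if eq: "h_index V E = 4 ^ (n - 1) * n ^ n"
    proof -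
      have s2: "sum e V = n - 2"
      proof (rule ccontr)
        assume "sum e V \<noteq> n - 2"
        then have "F (sum e V) < F (n - 2)" using se F_mono_strict by simp
        then have "4^(n-1) * F (sum e V) < 4^(n-1) * F (n - 2)" by simp
        moreover have "h_index V E \<le> 4^(n - 1) * F (sum e V)" using pr hF assms(2) by simp
        ultimately show False using eq Fn by simp
      qed
      have no2: "\<not> (\<exists>w1\<in>V. \<exists>w2\<in>V. w1 \<noteq> w2 \<and> e w1 \<ge> 1 \<and> e w2 \<ge> 1)"
      proof
        assume "\<exists>w1\<in>V. \<exists>w2\<in>V. w1 \<noteq> w2 \<and> e w1 \<ge> 1 \<and> e w2 \<ge> 1"
        then have "h_index V E < 4^(n - 1) * F (sum e V)" using pr hF assms(2) by simp
        then show False using eq Fn s2 by simp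
      qed
      obtain c where c: "c \<in> V" and oth: "\<forall>w\<in>V - {c}. e w = 0"
      proof (cases "\<exists>c\<in>V. e c \<ge> 1")
        case True
        then obtain c where "c \<in> V" "e c \<ge> 1" by blast
        then show ?thesis using no2 that by force
      next
        case False
        obtain c where "c \<in> V" using Vne by blast
        then show ?thesis using False that by force
      qed
      have "sum e V = e c + sum e (V - {c})" using fV c by (simp add: sum.remove)
      also have "sum e (V - {c}) = 0" using oth by simp
      finally have "e c = n - 2" using s2 by simp
      then have dc: "degree E c = n - 1" using dpos[OF c] n2 unfolding e_def by simp
      define N where "N = {x\<in>E. c \<in> x}"
      have cN: "card N = n - 1" using dc unfolding N_def degree_def by simp
      have inj: "inj_on (\<lambda>x. {c,x}) (V - {c})" by (rule inj_onI) (auto simp: doubleton_eq_iff)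
      have cg: "card (?g c) = n - 1" using card_image[OF inj] fV c assms(2) by simp
      have Ng: "N \<subseteq> ?g c"
      proof
        fix x assume x: "x \<in> N"
        then have "x \<in> E" "c \<in> x" unfolding N_def by auto
        then obtain a b where ab: "x = {a,b}" "a \<noteq> b" "x \<subseteq> V" using g unfolding sgraph_def
          by (metis card_2_iff)
        then show "x \<in> ?g c" using \<open>c \<in> x\<close> by (auto simp: insert_commute)
      qed
      have "N = ?g c" using card_subset_eq[OF _ Ng] fV cN cg by simp
      moreover have "N = E"
      proof -
        have NE: "N \<subseteq> E" unfolding N_def by blast
        have "card N \<le> card E" using card_mono[OF fE NE] .
        moreover have "card E \<le> card N" using cE cN by simp
        ultimately have "card N = card E" by simp
        then show ?thesis using card_subset_eq[OF fE NE] by simp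
      qed
      ultimately have "E = ?g c" by simp
      then show ?thesis using star_iso[OF fV c _ assms(2)] by simp
    qed
    show ?thesis using le fwd conv by blast
  qed
qed


end
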